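(* For every $\delta\in\mathcal{D}^{LSL}$, Gini's gamma, Spearman's footrule and Blomqvist's beta of $S_\delta$ are given by $$\gamma(S_\delta)=4\int_{[0,\frac12]}\Big(\delta(x)+x\tfrac{\delta(1-x)}{1-x}\Big)\,d\lambda(x)+4\int_{[\frac12,1]}\tfrac{\delta(x)}{x}\,d\lambda(x)-2,$$ $$\phi(S_\delta)=6\int_{[0,1]}\delta(x)\,d\lambda(x)-2,\qquad \beta(S_\delta)=4\,\delta(\tfrac12)-1,$$ and they fulfill $\gamma(S_\delta),\phi(S_\delta),\beta(S_\delta)\in[0,1]$.
   Context: $\lambda$ is Lebesgue measure on $[0,1]$. Let $\mathcal{D}$ be the set of all functions $\delta:[0,1]\to[0,1]$ with $\delta(u)\le u$, $\delta(1)=1$, $\delta$ non-decreasing and 2-Lipschitz. Let $\mathcal{D}^{LSL}$ be the set of $\delta\in\mathcal{D}$ such that $x\mapsto\delta(x)/x$ is non-decreasing and $x\mapsto\delta(x)/x^2$ is non-increasing on $(0,1]$. For $\delta\in\mathcal{D}^{LSL}$, $S_\delta(x,y)=y\,\delta(x)/x$ if $y\le x$ and $x\,\delta(y)/y$ otherwise (convention $0/0:=0$); it is a copula. For a copula $C$: Gini's gamma $\gamma(C)=4\int_{[0,1]}C(x,x)\,d\lambda(x)+4\int_{[0,1]}C(x,1-x)\,d\lambda(x)-2$, Spearman's footrule $\phi(C)=6\int_{[0,1]}C(x,x)\,d\lambda(x)-2$, Blomqvist's beta $\beta(C)=4C(\tfrac12,\tfrac12)-1$. *)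

theory Defs
  imports "HOL-Analysis.Analysis"
begin

definition diag_class :: "(real \<Rightarrow> real) set" where
  "diag_class = {\<delta>. (\<forall>u\<in>{0..1}. \<delta> u \<in> {0..1} \<and> \<delta> u \<le> u)
      \<and> \<delta> 1 = 1 \<and> mono_on {0..1} \<delta> \<and> 2-lipschitz_on {0..1} \<delta>}"

definition diag_class_LSL :: "(real \<Rightarrow> real) set" where
  "diag_class_LSL = {\<delta> \<in> diag_class.
      mono_on {0<..1} (\<lambda>x. \<delta> x / x) \<and> antimono_on {0<..1} (\<lambda>x. \<delta> x / x\<^sup>2)}"

text \<open>S_delta; note that in Isabelle/HOL x / 0 = 0, matching the convention 0/0 := 0.\<close>
definition S_delta :: "(real \<Rightarrow> real) \<Rightarrow> real \<Rightarrow> real \<Rightarrow> real" where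
  "S_delta \<delta> x y = (if y \<le> x then y * \<delta> x / x else x * \<delta> y / y)"

definition gini_gamma :: "(real \<Rightarrow> real \<Rightarrow> real) \<Rightarrow> real" where
  "gini_gamma C = 4 * integral\<^sup>L (lebesgue_on {0..1}) (\<lambda>x. C x x)
     + 4 * integral\<^sup>L (lebesgue_on {0..1}) (\<lambda>x. C x (1 - x)) - 2"

definition spearman_footrule :: "(real \<Rightarrow> real \<Rightarrow> real) \<Rightarrow> real" where
  "spearman_footrule C = 6 * integral\<^sup>L (lebesgue_on {0..1}) (\<lambda>x. C x x) - 2"

definition blomqvist_beta :: "(real \<Rightarrow> real \<Rightarrow> real) \<Rightarrow> real" where
  "blomqvist_beta C = 4 * C (1/2) (1/2) - 1"

end

theory Submission
  imports Defs
begin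

lemma int_pow:
  fixes a b c :: real
  assumes "a \<le> b"
  shows "integral\<^sup>L (lebesgue_on {a..b}) (\<lambda>x. c * x ^ k) = c * (b ^ Suc k - a ^ Suc k) / Suc k"
proof -
  have cont: "continuous_on {a..b} (\<lambda>x. c * x ^ k)" by (intro continuous_intros)
  have "((\<lambda>x. c * x ^ k) has_integral (c * b ^ Suc k / Suc k - c * a ^ Suc k / Suc k)) {a..b}"
    apply (rule fundamental_theorem_of_calculus[OF assms])
    apply (auto intro!: derivative_eq_intros simp: has_real_derivative_iff_has_vector_derivative[symmetric])
    apply (cases k)
     apply (auto simp: field_simps)
    done
  then have "integral {a..b} (\<lambda>x. c * x ^ k) = c * b ^ Suc k / Suc k - c * a ^ Suc k / Suc k"
    by (rule integral_unique)
  then have "integral {a..b} (\<lambda>x. c * x ^ k) = c * (b ^ Suc k - a ^ Suc k) / Suc k"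
    by (simp only: right_diff_distrib diff_divide_distrib)
  moreover have "integral\<^sup>L (lebesgue_on {a..b}) (\<lambda>x. c * x ^ k) = integral {a..b} (\<lambda>x. c * x ^ k)"
    by (rule lebesgue_integral_eq_integral[OF continuous_imp_integrable_real[OF cont]]) simp
  ultimately show ?thesis by simp
qed

theorem mainTheorem12:
  fixes \<delta> :: "real \<Rightarrow> real"
  assumes "\<delta> \<in> diag_class_LSL"
  shows "gini_gamma (S_delta \<delta>) =
           4 * integral\<^sup>L (lebesgue_on {0..1/2}) (\<lambda>x. \<delta> x + x * \<delta> (1 - x) / (1 - x))
         + 4 * integral\<^sup>L (lebesgue_on {1/2..1}) (\<lambda>x. \<delta> x / x) - 2
       \<and> spearman_footrule (S_delta \<delta>) = 6 * integral\<^sup>L (lebesgue_on {0..1}) \<delta> - 2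
       \<and> blomqvist_beta (S_delta \<delta>) = 4 * \<delta> (1/2) - 1
       \<and> gini_gamma (S_delta \<delta>) \<in> {0..1}
       \<and> spearman_footrule (S_delta \<delta>) \<in> {0..1}
       \<and> blomqvist_beta (S_delta \<delta>) \<in> {0..1}"
proof -
  have dom: "\<And>u. u \<in> {0..1} \<Longrightarrow> 0 \<le> \<delta> u \<and> \<delta> u \<le> 1 \<and> \<delta> u \<le> u"
    using assms unfolding diag_class_LSL_def diag_class_def by auto
  have d1: "\<delta> 1 = 1" using assms unfolding diag_class_LSL_def diag_class_def by auto
  have L: "2-lipschitz_on {0..1} \<delta>" using assms unfolding diag_class_LSL_def diag_class_def by auto
  have anti: "antimono_on {0<..1} (\<lambda>x. \<delta> x / x\<^sup>2)" using assms unfolding diag_class_LSL_def by auto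
  have d0: "\<delta> 0 = 0" using dom[of 0] by auto
  have sq: "x\<^sup>2 \<le> \<delta> x" if "x \<in> {0..1}" for x
  proof (cases "x = 0")
    case True then show ?thesis using d0 by simp
  next
    case False
    then have xp: "x > 0" using that by auto
    have "\<delta> 1 / 1\<^sup>2 \<le> \<delta> x / x\<^sup>2"
      using monotone_onD[OF anti, of x 1] that xp by auto
    then have "1 \<le> \<delta> x / x\<^sup>2" using d1 by simp
    then show ?thesis using xp by (simp add: field_simps)
  qed
  have cd: "continuous_on {0..1} \<delta>" using lipschitz_on_continuous_on[OF L] .
  have cd1: "continuous_on {0..1/2} \<delta>" using continuous_on_subset[OF cd] by auto
  have cd2: "continuous_on {1/2..1} \<delta>" using continuous_on_subset[OF cd] by auto
  define g where "g = (\<lambda>x::real. x * \<delta> (1 - x) / (1 - x))"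
  define h where "h = (\<lambda>x::real. \<delta> x / x)"
  have cg: "continuous_on {0..1/2} g"
  proof -
    have "continuous_on {0..1/2} (\<lambda>x::real. \<delta> (1 - x))"
      by (rule continuous_on_compose2[OF cd]) (auto intro!: continuous_intros)
    then show ?thesis unfolding g_def by (auto intro!: continuous_intros)
  qed
  have ch: "continuous_on {1/2..1} h"
    unfolding h_def using cd2 by (auto intro!: continuous_intros)
  have ch': "continuous_on {1/2..1} (\<lambda>x. (1 - x) * \<delta> x / x)"
    using cd2 by (auto intro!: continuous_intros)
  have idg: "integrable (lebesgue_on {0..1/2}) g" by (rule continuous_imp_integrable_real[OF cg])
  have idh: "integrable (lebesgue_on {1/2..1}) h" by (rule continuous_imp_integrable_real[OF ch])
  have id: "integrable (lebesgue_on {0..1}) \<delta>" by (rule continuous_imp_integrable_real[OF cd])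
  have id1: "integrable (lebesgue_on {0..1/2}) \<delta>" by (rule continuous_imp_integrable_real[OF cd1])
  have id2: "integrable (lebesgue_on {1/2..1}) \<delta>" by (rule continuous_imp_integrable_real[OF cd2])
  have diag: "integral\<^sup>L (lebesgue_on {0..1}) (\<lambda>x. S_delta \<delta> x x) = integral\<^sup>L (lebesgue_on {0..1}) \<delta>"
    by (rule Bochner_Integration.integral_cong) (auto simp: S_delta_def d0)
  define A where "A = (\<lambda>x. S_delta \<delta> x (1 - x))"
  have A1: "A x = g x" if "x \<in> {0..1/2}" for x
  proof (cases "x = 1/2")
    case True
    have "A (1/2) = g (1/2)" by (simp add: A_def S_delta_def g_def)
    with True show ?thesis by (simp only:)
  next
    case False then have "\<not> (1 - x \<le> x)" using that by auto
    then show ?thesis by (simp add: A_def S_delta_def g_def)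
  qed
  have A2: "A x = (1 - x) * \<delta> x / x" if "x \<in> {1/2..1}" for x
  proof (cases "x = 1/2")
    case True
    have "A (1/2) = (1 - 1/2) * \<delta> (1/2) / (1/2)" by (simp add: A_def S_delta_def)
    with True show ?thesis by (simp only:)
  next
    case False then have "1 - x \<le> x" using that by auto
    then show ?thesis by (simp add: A_def S_delta_def)
  qed
  have cA: "continuous_on {0..1} A"
  proof -
    have "continuous_on ({0..1/2} \<union> {1/2..1}) A"
    proof (rule continuous_on_closed_Un)
      show "continuous_on {0..1/2} A"
        using continuous_on_cong[of "{0..1/2}" "{0..1/2}" A g] A1 cg by blast
      show "continuous_on {1/2..1} A"
        using continuous_on_cong[of "{1/2..1}" "{1/2..1}" A "\<lambda>x. (1 - x) * \<delta> x / x"] A2 ch' by blast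
    qed auto
    moreover have "{0..1/2} \<union> {1/2..1} = {0..1::real}" by auto
    ultimately show ?thesis by simp
  qed
  have "integral\<^sup>L (lebesgue_on {0..1}) A
      = integral\<^sup>L (lebesgue_on {0..1/2}) A + integral\<^sup>L (lebesgue_on {1/2..1}) A"
    by (rule integral_combine[OF continuous_imp_integrable_real[OF cA]]) auto
  also have "integral\<^sup>L (lebesgue_on {0..1/2}) A = integral\<^sup>L (lebesgue_on {0..1/2}) g"
    by (rule Bochner_Integration.integral_cong) (auto simp: A1)
  also have "integral\<^sup>L (lebesgue_on {1/2..1}) A = integral\<^sup>L (lebesgue_on {1/2..1}) (\<lambda>x. h x - \<delta> x)"
    by (rule Bochner_Integration.integral_cong) (auto simp: A2 h_def field_simps)
  also have "\<dots> = integral\<^sup>L (lebesgue_on {1/2..1}) h - integral\<^sup>L (lebesgue_on {1/2..1}) \<delta>"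
    by (rule Bochner_Integration.integral_diff[OF idh id2])
  finally have anti_eq: "integral\<^sup>L (lebesgue_on {0..1}) A = integral\<^sup>L (lebesgue_on {0..1/2}) g
     + integral\<^sup>L (lebesgue_on {1/2..1}) h - integral\<^sup>L (lebesgue_on {1/2..1}) \<delta>" by simp
  have dsplit: "integral\<^sup>L (lebesgue_on {0..1}) \<delta> = integral\<^sup>L (lebesgue_on {0..1/2}) \<delta> + integral\<^sup>L (lebesgue_on {1/2..1}) \<delta>"
    by (rule integral_combine[OF id]) auto
  have gadd: "integral\<^sup>L (lebesgue_on {0..1/2}) (\<lambda>x. \<delta> x + x * \<delta> (1 - x) / (1 - x))
      = integral\<^sup>L (lebesgue_on {0..1/2}) \<delta> + integral\<^sup>L (lebesgue_on {0..1/2}) g"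
    using Bochner_Integration.integral_add[OF id1 idg] unfolding g_def by simp
  have G: "gini_gamma (S_delta \<delta>) =
           4 * integral\<^sup>L (lebesgue_on {0..1/2}) (\<lambda>x. \<delta> x + x * \<delta> (1 - x) / (1 - x))
         + 4 * integral\<^sup>L (lebesgue_on {1/2..1}) (\<lambda>x. \<delta> x / x) - 2"
    unfolding gini_gamma_def diag gadd using anti_eq dsplit unfolding A_def h_def by simp
  have F: "spearman_footrule (S_delta \<delta>) = 6 * integral\<^sup>L (lebesgue_on {0..1}) \<delta> - 2"
    unfolding spearman_footrule_def diag ..
  have B: "blomqvist_beta (S_delta \<delta>) = 4 * \<delta> (1/2) - 1"
    unfolding blomqvist_beta_def S_delta_def by simp
  have Bb: "4 * \<delta> (1/2) - 1 \<in> {0..1}"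
    using sq[of "1/2"] dom[of "1/2"] by (auto simp: power2_eq_square)
  have lo1: "integral\<^sup>L (lebesgue_on {0..1}) (\<lambda>x. 1 * x ^ 2) \<le> integral\<^sup>L (lebesgue_on {0..1}) \<delta>"
    by (rule integral_mono[OF continuous_imp_integrable_real id]) (auto intro!: continuous_intros sq)
  have hi1: "integral\<^sup>L (lebesgue_on {0..1}) \<delta> \<le> integral\<^sup>L (lebesgue_on {0..1}) (\<lambda>x. 1 * x ^ 1)"
    by (rule integral_mono[OF id continuous_imp_integrable_real]) (auto intro!: continuous_intros simp: dom)
  have Fb: "6 * integral\<^sup>L (lebesgue_on {0..1}) \<delta> - 2 \<in> {0..1}"
  proof -
    have e5: "integral\<^sup>L (lebesgue_on {0..1}) (\<lambda>x. 1 * x ^ 2) = (1/3::real)" by (subst int_pow) auto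
    have e6: "integral\<^sup>L (lebesgue_on {0..1}) (\<lambda>x. 1 * x ^ 1) = (1/2::real)" by (subst int_pow) auto
    show ?thesis using lo1[unfolded e5] hi1[unfolded e6] by simp
  qed
  have igg: "integrable (lebesgue_on {0..1/2}) (\<lambda>x. \<delta> x + x * \<delta> (1 - x) / (1 - x))"
    using Bochner_Integration.integrable_add[OF id1 idg] unfolding g_def by simp
  have pg1: "x \<le> \<delta> x + x * \<delta> (1 - x) / (1 - x)" if "x \<in> {0..1/2}" for x
  proof -
    have "(1 - x)\<^sup>2 \<le> \<delta> (1 - x)" using sq[of "1 - x"] that by auto
    then have "1 - x \<le> \<delta> (1 - x) / (1 - x)" using that
      by (simp add: field_simps power2_eq_square)
    then have "x * (1 - x) \<le> x * (\<delta> (1 - x) / (1 - x))" using that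
      by (intro mult_left_mono) auto
    then have "x * (1 - x) \<le> x * \<delta> (1 - x) / (1 - x)" by simp
    moreover have "x\<^sup>2 \<le> \<delta> x" using sq that by auto
    ultimately show ?thesis by (simp add: power2_eq_square algebra_simps)
  qed
  have pg2: "\<delta> x + x * \<delta> (1 - x) / (1 - x) \<le> 2 * x" if "x \<in> {0..1/2}" for x
  proof -
    have "\<delta> (1 - x) \<le> 1 - x" using dom[of "1 - x"] that by auto
    then have "\<delta> (1 - x) / (1 - x) \<le> 1" using that
      by (simp add: field_simps)
    then have "x * (\<delta> (1 - x) / (1 - x)) \<le> x * 1" using that
      by (intro mult_left_mono) auto
    then have "x * \<delta> (1 - x) / (1 - x) \<le> x" by simp
    moreover have "\<delta> x \<le> x" using dom that by auto
    ultimately show ?thesis by simp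
  qed
  have ph1: "x \<le> \<delta> x / x" if "x \<in> {1/2..1}" for x
    using sq[of x] that by (simp add: field_simps power2_eq_square)
  have ph2: "\<delta> x / x \<le> 1" if "x \<in> {1/2..1}" for x
    using dom[of x] that by (simp add: field_simps)
  have l2: "integral\<^sup>L (lebesgue_on {0..1/2}) (\<lambda>x. 1 * x ^ 1) \<le> integral\<^sup>L (lebesgue_on {0..1/2}) (\<lambda>x. \<delta> x + x * \<delta> (1 - x) / (1 - x))"
    by (rule integral_mono[OF continuous_imp_integrable_real igg]) (auto intro!: continuous_intros pg1)
  have h2: "integral\<^sup>L (lebesgue_on {0..1/2}) (\<lambda>x. \<delta> x + x * \<delta> (1 - x) / (1 - x)) \<le> integral\<^sup>L (lebesgue_on {0..1/2}) (\<lambda>x. 2 * x ^ 1)"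
    by (rule integral_mono[OF igg continuous_imp_integrable_real]) (auto intro!: continuous_intros pg2)
  have l3: "integral\<^sup>L (lebesgue_on {1/2..1}) (\<lambda>x. 1 * x ^ 1) \<le> integral\<^sup>L (lebesgue_on {1/2..1}) (\<lambda>x. \<delta> x / x)"
    by (rule integral_mono[OF continuous_imp_integrable_real idh[unfolded h_def]]) (auto intro!: continuous_intros ph1)
  have h3: "integral\<^sup>L (lebesgue_on {1/2..1}) (\<lambda>x. \<delta> x / x) \<le> integral\<^sup>L (lebesgue_on {1/2..1}) (\<lambda>x. 1 * x ^ 0)"
    by (rule integral_mono[OF idh[unfolded h_def] continuous_imp_integrable_real]) (auto intro!: continuous_intros ph2 simp: dom)
  have e1: "integral\<^sup>L (lebesgue_on {0..1/2}) (\<lambda>x. 1 * x ^ 1) = (1/8::real)" by (subst int_pow) auto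
  have e2: "integral\<^sup>L (lebesgue_on {0..1/2}) (\<lambda>x. 2 * x ^ 1) = (1/4::real)" by (subst int_pow) auto
  have e3: "integral\<^sup>L (lebesgue_on {1/2..1}) (\<lambda>x. 1 * x ^ 1) = (3/8::real)" by (subst int_pow) auto
  have e4: "integral\<^sup>L (lebesgue_on {1/2..1}) (\<lambda>x. 1 * x ^ 0) = (1/2::real)" by (subst int_pow) auto
  have Gb: "gini_gamma (S_delta \<delta>) \<in> {0..1}"
    unfolding G using l2[unfolded e1] h2[unfolded e2] l3[unfolded e3] h3[unfolded e4] by simp
  show ?thesis using G F B Gb Fb Bb by (simp only: F B)
qed

end
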